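(* Let $(\Omega,S)$ be a scheme such that for every $\alpha\in\Omega$ the $\alpha$-extension $(\Omega,S_\alpha)$ is semiregular on $\Omega\setminus\{\alpha\}$ and its fibers are exactly the sets $\alpha s$, $s\in S$. Then $(\Omega,S)$ is a regular scheme or a Frobenius scheme.
   Context: A coherent configuration is a pair $(\Omega,S)$ with $\Omega$ finite and $S$ a partition of $\Omega\times\Omega$ such that the diagonal $1_\Omega$ is a union of elements of $S$, $S$ is closed under transposition, and for $r,s,t\in S$ the number $c_{rs}^t=|\{\beta:(\alpha,\beta)\in r,(\beta,\gamma)\in s\}|$ does not depend on $(\alpha,\gamma)\in t$. A scheme is one with $1_\Omega\in S$; $\alpha s=\{\beta:(\alpha,\beta)\in s\}$. A coherent configuration is semiregular if $|\alpha s|\le 1$ for all $\alpha,s$; a semiregular scheme is called regular. Fibers of $(\Omega,T)$ are sets $\Delta$ with $1_\Delta\in T$. The $\alpha$-extension $(\Omega,S_\alpha)$ is the coarsest coherent configuration on $\Omega$ such that $\{(\alpha,\alpha)\}$ and every $s\in S$ are unions of its basis relations; it is semiregular on $\Omega\setminus\{\alpha\}$ if $|\beta s|\le1$ for all $\beta\ne\alpha$ and $s\in S_\alpha$ with $s\subseteq(\Omega\setminus\{\alpha\})^2$. A Frobenius group is a non-regular transitive permutation group in which only the identity fixes two distinct points; a Frobenius scheme is the scheme (set of orbits on $\Omega\times\Omega$) of a Frobenius group. *)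

theory Defs
  imports Main
begin

definition nbhd :: "'a \<Rightarrow> ('a \<times> 'a) set \<Rightarrow> 'a set" where
  "nbhd a s = {b. (a, b) \<in> s}"

definition is_partition :: "'a set \<Rightarrow> ('a \<times> 'a) set set \<Rightarrow> bool" where
  "is_partition \<Omega> S \<longleftrightarrow>
     (\<forall>s\<in>S. s \<noteq> {}) \<and> \<Union>S = \<Omega> \<times> \<Omega> \<and>
     (\<forall>s\<in>S. \<forall>t\<in>S. s \<noteq> t \<longrightarrow> s \<inter> t = {})"

definition union_of :: "('a \<times> 'a) set set \<Rightarrow> ('a \<times> 'a) set \<Rightarrow> bool" where
  "union_of T x \<longleftrightarrow> x = \<Union>{t\<in>T. t \<subseteq> x}"

definition coherent_config :: "'a set \<Rightarrow> ('a \<times> 'a) set set \<Rightarrow> bool" where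
  "coherent_config \<Omega> S \<longleftrightarrow>
     finite \<Omega> \<and> is_partition \<Omega> S \<and>
     union_of S (Id_on \<Omega>) \<and>
     (\<forall>s\<in>S. s\<inverse> \<in> S) \<and>
     (\<forall>r\<in>S. \<forall>s\<in>S. \<forall>t\<in>S. \<forall>a c a' c'. (a, c) \<in> t \<longrightarrow> (a', c') \<in> t \<longrightarrow>
        card {b. (a, b) \<in> r \<and> (b, c) \<in> s} = card {b. (a', b) \<in> r \<and> (b, c') \<in> s})"

definition scheme :: "'a set \<Rightarrow> ('a \<times> 'a) set set \<Rightarrow> bool" where
  "scheme \<Omega> S \<longleftrightarrow> coherent_config \<Omega> S \<and> Id_on \<Omega> \<in> S"

definition semiregular :: "'a set \<Rightarrow> ('a \<times> 'a) set set \<Rightarrow> bool" where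
  "semiregular \<Omega> S \<longleftrightarrow> coherent_config \<Omega> S \<and>
     (\<forall>a\<in>\<Omega>. \<forall>s\<in>S. card (nbhd a s) \<le> 1)"

definition regular_scheme :: "'a set \<Rightarrow> ('a \<times> 'a) set set \<Rightarrow> bool" where
  "regular_scheme \<Omega> S \<longleftrightarrow> scheme \<Omega> S \<and> semiregular \<Omega> S"

definition fibers :: "('a \<times> 'a) set set \<Rightarrow> 'a set set" where
  "fibers T = {\<Delta>. Id_on \<Delta> \<in> T}"

text \<open>T is the alpha-extension of (Omega,S): the coarsest coherent configuration on Omega
  in which {(alpha,alpha)} and every s in S are unions of basis relations.\<close>
definition extension_admissible ::
  "'a set \<Rightarrow> ('a \<times> 'a) set set \<Rightarrow> 'a \<Rightarrow> ('a \<times> 'a) set set \<Rightarrow> bool" where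
  "extension_admissible \<Omega> S a T \<longleftrightarrow>
     coherent_config \<Omega> T \<and> union_of T {(a, a)} \<and> (\<forall>s\<in>S. union_of T s)"

definition is_alpha_extension ::
  "'a set \<Rightarrow> ('a \<times> 'a) set set \<Rightarrow> 'a \<Rightarrow> ('a \<times> 'a) set set \<Rightarrow> bool" where
  "is_alpha_extension \<Omega> S a T \<longleftrightarrow>
     extension_admissible \<Omega> S a T \<and>
     (\<forall>T'. extension_admissible \<Omega> S a T' \<longrightarrow> (\<forall>t\<in>T. union_of T' t))"

definition semiregular_on :: "('a \<times> 'a) set set \<Rightarrow> 'a set \<Rightarrow> bool" where
  "semiregular_on T \<Gamma> \<longleftrightarrow>
     (\<forall>b\<in>\<Gamma>. \<forall>s\<in>T. s \<subseteq> \<Gamma> \<times> \<Gamma> \<longrightarrow> card (nbhd b s) \<le> 1)"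

definition perm_group :: "'a set \<Rightarrow> ('a \<Rightarrow> 'a) set \<Rightarrow> bool" where
  "perm_group \<Omega> G \<longleftrightarrow>
     (\<forall>g\<in>G. bij_betw g \<Omega> \<Omega> \<and> (\<forall>x. x \<notin> \<Omega> \<longrightarrow> g x = x)) \<and>
     id \<in> G \<and> (\<forall>g\<in>G. \<forall>h\<in>G. g \<circ> h \<in> G) \<and> (\<forall>g\<in>G. inv g \<in> G)"

definition transitive_on :: "'a set \<Rightarrow> ('a \<Rightarrow> 'a) set \<Rightarrow> bool" where
  "transitive_on \<Omega> G \<longleftrightarrow> (\<forall>a\<in>\<Omega>. \<forall>b\<in>\<Omega>. \<exists>g\<in>G. g a = b)"

definition frobenius_group :: "'a set \<Rightarrow> ('a \<Rightarrow> 'a) set \<Rightarrow> bool" where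
  "frobenius_group \<Omega> G \<longleftrightarrow>
     perm_group \<Omega> G \<and> transitive_on \<Omega> G \<and>
     (\<exists>g\<in>G. g \<noteq> id \<and> (\<exists>a\<in>\<Omega>. g a = a)) \<and>
     (\<forall>g\<in>G. \<forall>a\<in>\<Omega>. \<forall>b\<in>\<Omega>. a \<noteq> b \<and> g a = a \<and> g b = b \<longrightarrow> g = id)"

definition orbitals :: "'a set \<Rightarrow> ('a \<Rightarrow> 'a) set \<Rightarrow> ('a \<times> 'a) set set" where
  "orbitals \<Omega> G = {{(g a, g b) | g. g \<in> G} | a b. a \<in> \<Omega> \<and> b \<in> \<Omega>}"

definition frobenius_scheme :: "'a set \<Rightarrow> ('a \<times> 'a) set set \<Rightarrow> bool" where
  "frobenius_scheme \<Omega> S \<longleftrightarrow> (\<exists>G. frobenius_group \<Omega> G \<and> S = orbitals \<Omega> G)"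

end

theory Submission
  imports Defs "HOL-Library.FuncSet"
begin

locale cc =
  fixes Om :: "'a set" and T :: "('a \<times> 'a) set set"
  assumes cc: "coherent_config Om T"
begin

lemma fin: "finite Om" using cc unfolding coherent_config_def by auto

lemma part: "is_partition Om T" using cc unfolding coherent_config_def by auto

lemma sub: "t \<in> T \<Longrightarrow> t \<subseteq> Om \<times> Om"
  using part unfolding is_partition_def by blast

lemma nonempty: "t \<in> T \<Longrightarrow> t \<noteq> {}"
  using part unfolding is_partition_def by blast

lemma finT: "finite T"
proof -
  have "T \<subseteq> Pow (Om \<times> Om)" using sub by blast
  moreover have "finite (Pow (Om \<times> Om))" using fin by simp
  ultimately show ?thesis by (rule finite_subset)
qed

lemma disj: "t \<in> T \<Longrightarrow> t' \<in> T \<Longrightarrow> p \<in> t \<Longrightarrow> p \<in> t' \<Longrightarrow> t = t'"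
  using part unfolding is_partition_def by blast

lemma ex_cls: "p \<in> Om \<times> Om \<Longrightarrow> \<exists>t\<in>T. p \<in> t"
  using part unfolding is_partition_def by blast

definition cls where "cls p = (THE t. t \<in> T \<and> p \<in> t)"

lemma cls_eq: "t \<in> T \<Longrightarrow> p \<in> t \<Longrightarrow> cls p = t"
  unfolding cls_def by (rule the_equality) (auto dest: disj)

lemma cls: "p \<in> Om \<times> Om \<Longrightarrow> cls p \<in> T \<and> p \<in> cls p"
  using ex_cls cls_eq by metis

lemma conv: "t \<in> T \<Longrightarrow> t\<inverse> \<in> T"
  using cc unfolding coherent_config_def by blast

lemma inter: "r \<in> T \<Longrightarrow> s \<in> T \<Longrightarrow> t \<in> T \<Longrightarrow> (a, c) \<in> t \<Longrightarrow> (a', c') \<in> t \<Longrightarrow>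
   card {b. (a, b) \<in> r \<and> (b, c) \<in> s} = card {b. (a', b) \<in> r \<and> (b, c') \<in> s}"
  using cc unfolding coherent_config_def by blast

lemma union_sub: "union_of T x \<Longrightarrow> t \<in> T \<Longrightarrow> p \<in> t \<Longrightarrow> p \<in> x \<Longrightarrow> t \<subseteq> x"
proof -
  assume x: "union_of T x" and t: "t \<in> T" and p: "p \<in> t" "p \<in> x"
  then obtain t' where "t' \<in> T" "t' \<subseteq> x" "p \<in> t'" unfolding union_of_def by blast
  with t p disj[of t t' p] show "t \<subseteq> x" by blast
qed

lemma union_closed: "union_of T x \<Longrightarrow> p \<in> x \<Longrightarrow> p \<in> Om \<times> Om \<Longrightarrow> cls p \<subseteq> x"
  using union_sub cls by blast

lemma union_in: "union_of T x \<Longrightarrow> x \<subseteq> Om \<times> Om"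
  unfolding union_of_def using sub by blast

lemma diagU: "union_of T (Id_on Om)"
  using cc unfolding coherent_config_def by blast

lemma diag_cls: "a \<in> Om \<Longrightarrow> cls (a, a) \<subseteq> Id_on Om"
  using union_closed[OF diagU] by (simp add: Id_on_iff)

lemma fin_set: "finite {b. (a, b) \<in> r \<and> P b}" if "r \<in> T"
proof -
  have "{b. (a, b) \<in> r \<and> P b} \<subseteq> Om" using sub[OF that] by blast
  then show ?thesis using fin finite_subset by blast
qed

lemma fin_nbhd: "r \<in> T \<Longrightarrow> finite (nbhd a r)"
  using fin_set[of r a "\<lambda>_. True"] unfolding nbhd_def by simp

lemma row: assumes t: "t \<in> T" and xy: "(x, y) \<in> t" and xy': "(x', y') \<in> t"
  shows "(x', x') \<in> cls (x, x)"
proof -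
  have xO: "x \<in> Om" using sub[OF t] xy by blast
  let ?d = "cls (x, x)"
  have d: "?d \<in> T" "(x,x) \<in> ?d" using cls xO by auto
  have dI: "?d \<subseteq> Id_on Om" using diag_cls xO by blast
  have "{b. (x, b) \<in> ?d \<and> (b, y) \<in> t} = {x}" using d dI xy by auto
  moreover have "card {b. (x, b) \<in> ?d \<and> (b, y) \<in> t} = card {b. (x', b) \<in> ?d \<and> (b, y') \<in> t}"
    by (rule inter[OF d(1) t t xy xy'])
  ultimately have "card {b. (x', b) \<in> ?d \<and> (b, y') \<in> t} = 1" by simp
  then have "{b. (x', b) \<in> ?d \<and> (b, y') \<in> t} \<noteq> {}" by force
  then obtain b where "(x', b) \<in> ?d" by blast
  with dI show ?thesis by (auto simp: Id_on_iff)
qed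

lemma col: assumes t: "t \<in> T" and xy: "(x, y) \<in> t" and xy': "(x', y') \<in> t"
  shows "(y', y') \<in> cls (y, y)"
proof -
  have yO: "y \<in> Om" using sub[OF t] xy by blast
  let ?d = "cls (y, y)"
  have d: "?d \<in> T" "(y,y) \<in> ?d" using cls yO by auto
  have dI: "?d \<subseteq> Id_on Om" using diag_cls yO by blast
  have "{b. (x, b) \<in> t \<and> (b, y) \<in> ?d} = {y}" using d dI xy by auto
  moreover have "card {b. (x, b) \<in> t \<and> (b, y) \<in> ?d} = card {b. (x', b) \<in> t \<and> (b, y') \<in> ?d}"
    by (rule inter[OF t d(1) t xy xy'])
  ultimately have "card {b. (x', b) \<in> t \<and> (b, y') \<in> ?d} = 1" by simp
  then have "{b. (x', b) \<in> t \<and> (b, y') \<in> ?d} \<noteq> {}" by force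
  then obtain b where "(b, y') \<in> ?d" by blast
  with dI show ?thesis by (auto simp: Id_on_iff)
qed

lemma const: assumes t: "t \<in> T" and xy: "(x, y) \<in> t" and x': "(x', x') \<in> cls (x, x)"
  shows "card (nbhd x' t) = card (nbhd x t)"
proof -
  have xO: "x \<in> Om" using sub[OF t] xy by blast
  let ?d = "cls (x, x)"
  have d: "?d \<in> T" "(x,x) \<in> ?d" using cls xO by auto
  have "card {b. (x, b) \<in> t \<and> (b, x) \<in> t\<inverse>} = card {b. (x', b) \<in> t \<and> (b, x') \<in> t\<inverse>}"
    by (rule inter[OF t conv[OF t] d(1) d(2) x'])
  then show ?thesis unfolding nbhd_def by simp
qed

lemma sum:
  assumes x: "union_of T x" and y: "union_of T y" and t: "t \<in> T"
    and p: "(a, c) \<in> t" and q: "(a', c') \<in> t"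
  shows "card {b. (a, b) \<in> x \<and> (b, c) \<in> y} = card {b. (a', b) \<in> x \<and> (b, c') \<in> y}"
proof -
  let ?I = "{r\<in>T. r \<subseteq> x} \<times> {s\<in>T. s \<subseteq> y}"
  define F where "F = (\<lambda>a c (rs :: ('a\<times>'a) set \<times> ('a\<times>'a) set). {b. (a, b) \<in> fst rs \<and> (b, c) \<in> snd rs})"
  have finI: "finite ?I" using finT by auto
  have dec: "{b. (a, b) \<in> x \<and> (b, c) \<in> y} = (\<Union>i\<in>?I. F a c i)" for a c
  proof
    show "{b. (a, b) \<in> x \<and> (b, c) \<in> y} \<subseteq> (\<Union>i\<in>?I. F a c i)"
    proof
      fix b assume "b \<in> {b. (a, b) \<in> x \<and> (b, c) \<in> y}"
      then have b: "(a, b) \<in> x" "(b, c) \<in> y" by auto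
      obtain r where r: "r \<in> T" "r \<subseteq> x" "(a, b) \<in> r" using b(1) x unfolding union_of_def by blast
      obtain s where s: "s \<in> T" "s \<subseteq> y" "(b, c) \<in> s" using b(2) y unfolding union_of_def by blast
      have "(r, s) \<in> ?I" using r s by auto
      moreover have "b \<in> F a c (r, s)" unfolding F_def using r s by auto
      ultimately show "b \<in> (\<Union>i\<in>?I. F a c i)" by blast
    qed
    show "(\<Union>i\<in>?I. F a c i) \<subseteq> {b. (a, b) \<in> x \<and> (b, c) \<in> y}"
      unfolding F_def by auto
  qed
  have cardF: "card (\<Union>i\<in>?I. F a c i) = (\<Sum>i\<in>?I. card (F a c i))" for a c
  proof (rule card_UN_disjoint[OF finI])
    show "\<forall>i\<in>?I. finite (F a c i)"
    proof
      fix i assume "i \<in> ?I"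
      then obtain r s where i: "i = (r, s)" "r \<in> T" by auto
      show "finite (F a c i)" unfolding F_def i fst_conv snd_conv by (rule fin_set[OF i(2)])
    qed
    show "\<forall>i\<in>?I. \<forall>j\<in>?I. i \<noteq> j \<longrightarrow> F a c i \<inter> F a c j = {}"
    proof (intro ballI impI)
      fix i j assume ij: "i \<in> ?I" "j \<in> ?I" "i \<noteq> j"
      then obtain r s r' s' where i: "i = (r, s)" "j = (r', s')" "r \<in> T" "s \<in> T" "r' \<in> T" "s' \<in> T" by auto
      show "F a c i \<inter> F a c j = {}"
      proof (rule ccontr)
        assume "F a c i \<inter> F a c j \<noteq> {}"
        then obtain b where "(a,b) \<in> r" "(a,b) \<in> r'" "(b,c) \<in> s" "(b,c) \<in> s'" unfolding F_def i by auto
        then have "r = r'" "s = s'" using disj i by blast+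
        then show False using ij i by simp
      qed
    qed
  qed
  have "(\<Sum>i\<in>?I. card (F a c i)) = (\<Sum>i\<in>?I. card (F a' c' i))"
  proof (rule sum.cong)
    fix i assume "i \<in> ?I"
    then obtain r s where i: "i = (r, s)" "r \<in> T" "s \<in> T" by auto
    show "card (F a c i) = card (F a' c' i)" unfolding F_def i fst_conv snd_conv
      by (rule inter[OF i(2) i(3) t p q])
  qed simp
  then show ?thesis using dec cardF by metis
qed

end

lemma quot_coherent:
  fixes Om :: "'a set" and R :: "(('a \<times> 'a) \<times> ('a \<times> 'a)) set"
  assumes fin: "finite Om"
    and Rsub: "R \<subseteq> (Om \<times> Om) \<times> (Om \<times> Om)"
    and Rrefl: "\<And>p. p \<in> Om \<times> Om \<Longrightarrow> (p, p) \<in> R"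
    and Rsym: "\<And>p q. (p, q) \<in> R \<Longrightarrow> (q, p) \<in> R"
    and Rswap: "\<And>p q. (p, q) \<in> R \<Longrightarrow> (prod.swap p, prod.swap q) \<in> R"
    and Rdiag: "\<And>p q. (p, q) \<in> R \<Longrightarrow> fst p = snd p \<Longrightarrow> fst q = snd q"
    and Rinv: "\<And>x y p q. x \<in> (Om \<times> Om) // (R\<^sup>+) \<Longrightarrow> y \<in> (Om \<times> Om) // (R\<^sup>+) \<Longrightarrow> (p, q) \<in> R \<Longrightarrow>
        card {b. (fst p, b) \<in> x \<and> (b, snd p) \<in> y} = card {b. (fst q, b) \<in> x \<and> (b, snd q) \<in> y}"
  shows "coherent_config Om ((Om \<times> Om) // (R\<^sup>+))"
proof -
  let ?E = "R\<^sup>+"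
  let ?P = "(Om \<times> Om) // ?E"
  have Esub: "?E \<subseteq> (Om \<times> Om) \<times> (Om \<times> Om)" using Rsub by (rule trancl_subset_Sigma)
  have symR: "sym R" using Rsym unfolding sym_def by blast
  have eq: "equiv (Om \<times> Om) ?E"
    unfolding equiv_def refl_on_def
  proof (intro conjI)
    show "?E \<subseteq> (Om \<times> Om) \<times> (Om \<times> Om)" by (rule Esub)
    show "\<forall>x\<in>Om \<times> Om. (x, x) \<in> ?E" using Rrefl by blast
    show "sym ?E" using symR by (rule sym_trancl)
    show "trans ?E" by (rule trans_trancl)
  qed
  have part: "is_partition Om ?P"
    unfolding is_partition_def
  proof (intro conjI)
    show "\<forall>s\<in>?P. s \<noteq> {}" using in_quotient_imp_non_empty[OF eq] by blast
    show "\<Union>?P = Om \<times> Om" using Union_quotient[OF eq] .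
    show "\<forall>s\<in>?P. \<forall>t\<in>?P. s \<noteq> t \<longrightarrow> s \<inter> t = {}" using quotient_disj[OF eq] by blast
  qed
  have Ediag: "(p, q) \<in> ?E \<Longrightarrow> fst p = snd p \<Longrightarrow> fst q = snd q" for p q
  proof (induction rule: trancl_induct)
    case (base u) then show ?case using Rdiag by blast
  next
    case (step u v) then show ?case using Rdiag by blast
  qed
  have Eswap: "(p, q) \<in> ?E \<Longrightarrow> (prod.swap p, prod.swap q) \<in> ?E" for p q
  proof (induction rule: trancl_induct)
    case (base u) then show ?case using Rswap by blast
  next
    case (step u v)
    have "(prod.swap u, prod.swap v) \<in> R" using Rswap step.hyps(2) .
    with step.IH show ?case by (rule trancl_into_trancl)
  qed
  have diag: "union_of ?P (Id_on Om)"
    unfolding union_of_def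
  proof
    show "Id_on Om \<subseteq> \<Union>{t \<in> ?P. t \<subseteq> Id_on Om}"
    proof
      fix p assume p: "p \<in> Id_on Om"
      then obtain a where a: "p = (a, a)" "a \<in> Om" by (auto simp: Id_on_def)
      have "?E `` {p} \<in> ?P" using a by (auto intro: quotientI)
      moreover have "p \<in> ?E `` {p}" using Rrefl a by blast
      moreover have "?E `` {p} \<subseteq> Id_on Om"
      proof
        fix q assume "q \<in> ?E `` {p}"
        then have q: "(p, q) \<in> ?E" by blast
        then have "fst q = snd q" using Ediag a by simp
        moreover have "q \<in> Om \<times> Om" using q Esub by blast
        ultimately show "q \<in> Id_on Om" by (cases q) (auto simp: Id_on_def)
      qed
      ultimately show "p \<in> \<Union>{t \<in> ?P. t \<subseteq> Id_on Om}" by blast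
    qed
  qed blast
  have conv: "x\<inverse> \<in> ?P" if x: "x \<in> ?P" for x
  proof -
    obtain p where p: "p \<in> Om \<times> Om" "x = ?E `` {p}" using x by (rule quotientE)
    have "x\<inverse> = ?E `` {prod.swap p}"
    proof (rule set_eqI)
      fix q :: "'a \<times> 'a"
      obtain u v where q: "q = (u, v)" by (cases q)
      have "q \<in> x\<inverse> \<longleftrightarrow> (p, (v, u)) \<in> ?E" using p q by auto
      also have "\<dots> \<longleftrightarrow> (prod.swap p, q) \<in> ?E"
        using Eswap[of p "(v,u)"] Eswap[of "prod.swap p" q] q by auto
      finally show "q \<in> x\<inverse> \<longleftrightarrow> q \<in> ?E `` {prod.swap p}" by blast
    qed
    moreover have "prod.swap p \<in> Om \<times> Om" using p by auto
    ultimately show ?thesis by (auto intro: quotientI)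
  qed
  have Einv: "(p, q) \<in> ?E \<Longrightarrow> card {b. (fst p, b) \<in> x \<and> (b, snd p) \<in> y} = card {b. (fst q, b) \<in> x \<and> (b, snd q) \<in> y}"
    if "x \<in> ?P" "y \<in> ?P" for x y p q
  proof (induction rule: trancl_induct)
    case (base u) then show ?case using Rinv[OF that] by blast
  next
    case (step u v)
    have "card {b. (fst u, b) \<in> x \<and> (b, snd u) \<in> y} = card {b. (fst v, b) \<in> x \<and> (b, snd v) \<in> y}"
      using Rinv[OF that step.hyps(2)] .
    with step.IH show ?case by simp
  qed
  show ?thesis unfolding coherent_config_def
  proof (intro conjI)
    show "finite Om" by (rule fin)
    show "is_partition Om ?P" by (rule part)
    show "union_of ?P (Id_on Om)" by (rule diag)
    show "\<forall>s\<in>?P. s\<inverse> \<in> ?P" using conv by blast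
    show "\<forall>r\<in>?P. \<forall>s\<in>?P. \<forall>t\<in>?P. \<forall>a c a' c'. (a, c) \<in> t \<longrightarrow> (a', c') \<in> t \<longrightarrow>
        card {b. (a, b) \<in> r \<and> (b, c) \<in> s} = card {b. (a', b) \<in> r \<and> (b, c') \<in> s}"
    proof (intro ballI allI impI)
      fix r s t a c a' c' assume rst: "r \<in> ?P" "s \<in> ?P" "t \<in> ?P" and ac: "(a, c) \<in> t" "(a', c') \<in> t"
      obtain p where p: "p \<in> Om \<times> Om" "t = ?E `` {p}" using rst(3) by (rule quotientE)
      have "(p, (a, c)) \<in> ?E" "(p, (a', c')) \<in> ?E" using ac p by auto
      moreover have "sym ?E" using symR by (rule sym_trancl)
      ultimately have "((a, c), p) \<in> ?E" "(p, (a', c')) \<in> ?E" by (auto dest: symD)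
      then have "((a, c), (a', c')) \<in> ?E" by (rule trancl_trans)
      from Einv[OF rst(1,2) this] show "card {b. (a, b) \<in> r \<and> (b, c) \<in> s} = card {b. (a', b) \<in> r \<and> (b, c') \<in> s}" by simp
    qed
  qed
qed

lemma quot_union:
  fixes R :: "(('a \<times> 'a) \<times> ('a \<times> 'a)) set"
  assumes Rrefl: "\<And>p. p \<in> Om \<times> Om \<Longrightarrow> (p, p) \<in> R"
    and A: "A \<subseteq> Om \<times> Om" and cl: "\<And>p q. (p, q) \<in> R \<Longrightarrow> p \<in> A \<Longrightarrow> q \<in> A"
  shows "union_of ((Om \<times> Om) // (R\<^sup>+)) A"
  unfolding union_of_def
proof
  show "A \<subseteq> \<Union>{t \<in> (Om \<times> Om) // R\<^sup>+. t \<subseteq> A}"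
  proof
    fix p assume p: "p \<in> A"
    have "R\<^sup>+ `` {p} \<in> (Om \<times> Om) // R\<^sup>+" using p A by (auto intro: quotientI)
    moreover have "p \<in> R\<^sup>+ `` {p}" using Rrefl p A by blast
    moreover have "R\<^sup>+ `` {p} \<subseteq> A"
    proof
      fix q assume "q \<in> R\<^sup>+ `` {p}"
      then have "(p, q) \<in> R\<^sup>+" by blast
      then show "q \<in> A"
      proof (induction rule: trancl_induct)
        case (base u) then show ?case using cl p by blast
      next
        case (step u v) then show ?case using cl by blast
      qed
    qed
    ultimately show "p \<in> \<Union>{t \<in> (Om \<times> Om) // R\<^sup>+. t \<subseteq> A}" by blast
  qed
qed blast

lemma quot_class_closed:
  fixes R :: "(('a \<times> 'a) \<times> ('a \<times> 'a)) set"
  assumes "x \<in> (Om \<times> Om) // (R\<^sup>+)" "(p, q) \<in> R" "p \<in> x"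
  shows "q \<in> x"
proof -
  obtain p0 where "x = R\<^sup>+ `` {p0}" using assms(1) by (rule quotientE)
  with assms show ?thesis by (meson Image_singleton_iff trancl.trancl_into_trancl)
qed

lemma quot_sub:
  fixes R :: "(('a \<times> 'a) \<times> ('a \<times> 'a)) set"
  assumes "R \<subseteq> (Om \<times> Om) \<times> (Om \<times> Om)" "x \<in> (Om \<times> Om) // (R\<^sup>+)"
  shows "x \<subseteq> Om \<times> Om"
proof -
  obtain p0 where "x = R\<^sup>+ `` {p0}" using assms(2) by (rule quotientE)
  moreover have "R\<^sup>+ \<subseteq> (Om \<times> Om) \<times> (Om \<times> Om)" using assms(1) by (rule trancl_subset_Sigma)
  ultimately show ?thesis by blast
qed

lemma discrete_cc:
  assumes fin: "finite Om"
  shows "coherent_config Om {{p} | p. p \<in> Om \<times> Om}"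
  unfolding coherent_config_def
proof (intro conjI)
  let ?D = "{{p} | p. p \<in> Om \<times> Om}"
  show "finite Om" by (rule fin)
  show "is_partition Om ?D" unfolding is_partition_def by blast
  show "union_of ?D (Id_on Om)" unfolding union_of_def by (auto simp: Id_on_def)
  show "\<forall>s\<in>?D. s\<inverse> \<in> ?D" by auto
  show "\<forall>r\<in>?D. \<forall>s\<in>?D. \<forall>t\<in>?D. \<forall>a c a' c'. (a, c) \<in> t \<longrightarrow> (a', c') \<in> t \<longrightarrow>
        card {b. (a, b) \<in> r \<and> (b, c) \<in> s} = card {b. (a', b) \<in> r \<and> (b, c') \<in> s}"
    by auto
qed

lemma ext_exists:
  assumes S: "coherent_config Om S" and a: "a \<in> Om"
  shows "\<exists>T. is_alpha_extension Om S a T"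
proof -
  interpret S: cc Om S by (rule cc.intro, rule S)
  have fin: "finite Om" by (rule S.fin)
  let ?adm = "extension_admissible Om S a"
  let ?D = "{{p} | p. p \<in> Om \<times> Om}"
  have Dadm: "?adm ?D" unfolding extension_admissible_def
  proof (intro conjI ballI)
    show "coherent_config Om ?D" by (rule discrete_cc[OF fin])
    show "union_of ?D {(a, a)}" using a unfolding union_of_def by auto
    fix s assume "s \<in> S"
    then have "s \<subseteq> Om \<times> Om" by (rule S.sub)
    then show "union_of ?D s" unfolding union_of_def by auto
  qed
  define R where "R = {(p, q). \<exists>T'. ?adm T' \<and> (\<exists>t\<in>T'. p \<in> t \<and> q \<in> t)}"
  have admcc: "?adm T' \<Longrightarrow> cc Om T'" for T'
    unfolding extension_admissible_def by (rule cc.intro) blast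
  have Rsub: "R \<subseteq> (Om \<times> Om) \<times> (Om \<times> Om)"
  proof
    fix pq assume "pq \<in> R"
    then obtain p q T' t where "pq = (p, q)" "?adm T'" "t \<in> T'" "p \<in> t" "q \<in> t" unfolding R_def by blast
    then show "pq \<in> (Om \<times> Om) \<times> (Om \<times> Om)" using cc.sub[OF admcc] by blast
  qed
  have Rrefl: "(p, p) \<in> R" if "p \<in> Om \<times> Om" for p
    unfolding R_def using Dadm that by blast
  have Rsym: "(q, p) \<in> R" if "(p, q) \<in> R" for p q using that unfolding R_def by blast
  have Rswap: "(prod.swap p, prod.swap q) \<in> R" if pq: "(p, q) \<in> R" for p q
  proof -
    obtain T' t where T': "?adm T'" "t \<in> T'" "p \<in> t" "q \<in> t" using pq unfolding R_def by blast
    interpret T: cc Om T' using admcc[OF T'(1)] .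
    have "t\<inverse> \<in> T'" using T.conv T'(2) by blast
    moreover have "prod.swap p \<in> t\<inverse>" using T'(3) by (cases p) simp
    moreover have "prod.swap q \<in> t\<inverse>" using T'(4) by (cases q) simp
    ultimately have "\<exists>t\<in>T'. prod.swap p \<in> t \<and> prod.swap q \<in> t"
      by (intro bexI[where x="t\<inverse>"] conjI)
    then have "\<exists>T''. ?adm T'' \<and> (\<exists>t\<in>T''. prod.swap p \<in> t \<and> prod.swap q \<in> t)"
      using T'(1) by (intro exI[where x=T'] conjI)
    then show ?thesis unfolding R_def by simp
  qed
  have Rdiag: "fst q = snd q" if pq: "(p, q) \<in> R" and pd: "fst p = snd p" for p q
  proof -
    obtain T' t where T': "?adm T'" "t \<in> T'" "p \<in> t" "q \<in> t" using pq unfolding R_def by blast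
    interpret T: cc Om T' using admcc[OF T'(1)] .
    have "p \<in> Om \<times> Om" using T.sub T' by blast
    then have "p \<in> Id_on Om" using pd by (cases p) (auto simp: Id_on_def)
    then have "t \<subseteq> Id_on Om" using T.union_sub[OF T.diagU T'(2) T'(3)] by blast
    then show ?thesis using T'(4) by (auto simp: Id_on_def)
  qed
  let ?P = "(Om \<times> Om) // (R\<^sup>+)"
  have closedU: "union_of T' x" if T': "?adm T'" and x: "x \<in> ?P" for T' x
  proof -
    interpret T: cc Om T' using admcc[OF T'] .
    have xO: "x \<subseteq> Om \<times> Om" using quot_sub[OF Rsub x] .
    show ?thesis unfolding union_of_def
    proof
      show "x \<subseteq> \<Union>{t \<in> T'. t \<subseteq> x}"
      proof
        fix u assume u: "u \<in> x"
        then have uO: "u \<in> Om \<times> Om" using xO by blast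
        have "T.cls u \<subseteq> x"
        proof
          fix w assume "w \<in> T.cls u"
          then have "(u, w) \<in> R" unfolding R_def using T' T.cls[OF uO] by blast
          then show "w \<in> x" using quot_class_closed[OF x _ u] by blast
        qed
        then show "u \<in> \<Union>{t \<in> T'. t \<subseteq> x}" using T.cls[OF uO] by blast
      qed
    qed blast
  qed
  have Rinv: "card {b. (fst p, b) \<in> x \<and> (b, snd p) \<in> y} = card {b. (fst q, b) \<in> x \<and> (b, snd q) \<in> y}"
    if xy: "x \<in> ?P" "y \<in> ?P" and pq: "(p, q) \<in> R" for x y p q
  proof -
    obtain T' t where T': "?adm T'" "t \<in> T'" "p \<in> t" "q \<in> t" using pq unfolding R_def by blast
    interpret T: cc Om T' using admcc[OF T'(1)] .
    have "(fst p, snd p) \<in> t" "(fst q, snd q) \<in> t" using T' by auto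
    from T.sum[OF closedU[OF T'(1) xy(1)] closedU[OF T'(1) xy(2)] T'(2) this]
    show ?thesis .
  qed
  have Pcc: "coherent_config Om ?P"
    by (rule quot_coherent[OF fin Rsub Rrefl Rsym Rswap Rdiag Rinv])
  have Padm: "?adm ?P" unfolding extension_admissible_def
  proof (intro conjI ballI)
    show "coherent_config Om ?P" by (rule Pcc)
    show "union_of ?P {(a, a)}"
    proof (rule quot_union[OF Rrefl])
      show "{(a, a)} \<subseteq> Om \<times> Om" using a by blast
    next
      fix p q assume "(p, q) \<in> R" "p \<in> {(a, a)}"
      then obtain T' t where T': "?adm T'" "t \<in> T'" "p \<in> t" "q \<in> t" "p = (a,a)" unfolding R_def by blast
      interpret T: cc Om T' using admcc[OF T'(1)] .
      have "union_of T' {(a,a)}" using T'(1) unfolding extension_admissible_def by blast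
      then have "t \<subseteq> {(a, a)}" using T.union_sub T' by blast
      then show "q \<in> {(a, a)}" using T' by blast
    qed
  next
    fix s assume s: "s \<in> S"
    show "union_of ?P s"
    proof (rule quot_union[OF Rrefl])
      show "s \<subseteq> Om \<times> Om" using S.sub s by blast
    next
      fix p q assume "(p, q) \<in> R" "p \<in> s"
      then obtain T' t where T': "?adm T'" "t \<in> T'" "p \<in> t" "q \<in> t" "p \<in> s" unfolding R_def by blast
      interpret T: cc Om T' using admcc[OF T'(1)] .
      have "union_of T' s" using T'(1) s unfolding extension_admissible_def by blast
      then have "t \<subseteq> s" using T.union_sub T' by blast
      then show "q \<in> s" using T' by blast
    qed
  qed
  have "is_alpha_extension Om S a ?P" unfolding is_alpha_extension_def
    using Padm closedU by blast
  then show ?thesis by blast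
qed

locale main =
  fixes Om :: "'a set" and S :: "('a \<times> 'a) set set"
  assumes sch: "scheme Om S"
    and hyp: "\<forall>a\<in>Om. \<forall>T. is_alpha_extension Om S a T \<longrightarrow>
           semiregular_on T (Om - {a}) \<and> fibers T = {nbhd a s | s. s \<in> S}"
begin

sublocale S: cc Om S
  using sch unfolding scheme_def by (intro cc.intro) blast

lemma IdS: "Id_on Om \<in> S" using sch unfolding scheme_def by blast

lemma S_diag_eq: "u \<in> S \<Longrightarrow> (x, x) \<in> u \<Longrightarrow> x \<in> Om \<Longrightarrow> u = Id_on Om"
  using S.disj[OF IdS, of u "(x,x)"] by (auto simp: Id_on_def)

lemma S_uniq: "u \<in> S \<Longrightarrow> u' \<in> S \<Longrightarrow> p \<in> u \<Longrightarrow> p \<in> u' \<Longrightarrow> u = u'"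
  by (rule S.disj)

definition aut where
  "aut g \<longleftrightarrow> bij_betw g Om Om \<and> (\<forall>x. x \<notin> Om \<longrightarrow> g x = x) \<and>
     (\<forall>s\<in>S. \<forall>x\<in>Om. \<forall>y\<in>Om. (x, y) \<in> s \<longleftrightarrow> (g x, g y) \<in> s)"

lemma aut_id: "aut id"
  unfolding aut_def by auto

lemma aut_fwd_iff:
  assumes img: "g ` Om \<subseteq> Om"
    and fwd: "\<And>u x y. u \<in> S \<Longrightarrow> x \<in> Om \<Longrightarrow> y \<in> Om \<Longrightarrow> (x, y) \<in> u \<Longrightarrow> (g x, g y) \<in> u"
    and u: "u \<in> S" and xy: "x \<in> Om" "y \<in> Om"
  shows "(x, y) \<in> u \<longleftrightarrow> (g x, g y) \<in> u"
proof
  assume "(x, y) \<in> u" then show "(g x, g y) \<in> u" using fwd u xy by blast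
next
  assume g: "(g x, g y) \<in> u"
  have c: "S.cls (x, y) \<in> S" "(x, y) \<in> S.cls (x, y)" using S.cls xy by auto
  have "(g x, g y) \<in> S.cls (x, y)" using fwd[OF c(1) xy c(2)] .
  then have "u = S.cls (x, y)" using S_uniq[OF u c(1) g] by blast
  then show "(x, y) \<in> u" using c by simp
qed

end

locale ext = main +
  fixes a :: 'a and T :: "('a \<times> 'a) set set"
  assumes aO: "a \<in> Om" and isext: "is_alpha_extension Om S a T"
begin

lemma T_adm: "extension_admissible Om S a T"
  using isext unfolding is_alpha_extension_def by blast

sublocale T: cc Om T
  using T_adm unfolding extension_admissible_def by (intro cc.intro) blast

lemma semi: "semiregular_on T (Om - {a})" using hyp aO isext by blast
lemma fib: "fibers T = {nbhd a s | s. s \<in> S}" using hyp aO isext by blast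

lemma TU: "s \<in> S \<Longrightarrow> union_of T s" using T_adm unfolding extension_admissible_def by blast
lemma TUa: "union_of T {(a, a)}" using T_adm unfolding extension_admissible_def by blast

lemma fibx:
  assumes x: "x \<in> Om" and u: "u \<in> S" and ax: "(a, x) \<in> u"
  shows "(y, y) \<in> T.cls (x, x) \<longleftrightarrow> (a, y) \<in> u"
proof -
  let ?d = "T.cls (x, x)"
  have d: "?d \<in> T" "(x, x) \<in> ?d" using T.cls x by auto
  have dI: "?d \<subseteq> Id_on Om" using T.diag_cls x .
  let ?D = "{z. (z, z) \<in> ?d}"
  have "?d = Id_on ?D" using dI by (auto simp: Id_on_def)
  then have "?D \<in> fibers T" using d unfolding fibers_def by simp
  then obtain u' where u': "u' \<in> S" "?D = nbhd a u'" using fib by blast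
  have "x \<in> ?D" using d by simp
  then have "(a, x) \<in> u'" using u' unfolding nbhd_def by blast
  then have "u' = u" using S_uniq[OF u'(1) u _ ax] by blast
  then show ?thesis using u' unfolding nbhd_def by blast
qed

lemma avoid:
  assumes x: "x \<in> Om" "x \<noteq> a" and y: "(y, y) \<in> T.cls (x, x)"
  shows "y \<noteq> a"
proof
  assume ya: "y = a"
  let ?u = "S.cls (a, x)"
  have u: "?u \<in> S" "(a, x) \<in> ?u" using S.cls aO x by auto
  have "(a, a) \<in> ?u" using fibx[OF x(1) u] y ya by blast
  then have "?u = Id_on Om" using S_diag_eq u aO by blast
  then show False using u x by (auto simp: Id_on_def)
qed

lemma tsub:
  assumes t: "t \<in> T" and xy: "(x, y) \<in> t" "x \<noteq> a" "y \<noteq> a" and p: "(x', y') \<in> t"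
  shows "x' \<in> Om - {a}" "y' \<in> Om - {a}"
proof -
  have xyO: "x \<in> Om" "y \<in> Om" "x' \<in> Om" "y' \<in> Om" using T.sub[OF t] xy p by auto
  show "x' \<in> Om - {a}" using avoid[OF xyO(1) xy(2) T.row[OF t xy(1) p]] xyO by blast
  show "y' \<in> Om - {a}" using avoid[OF xyO(2) xy(3) T.col[OF t xy(1) p]] xyO by blast
qed

lemma unique2:
  assumes t: "t \<in> T" and xy: "(x, y) \<in> t" "x \<noteq> a" "y \<noteq> a" and bz: "(b, z) \<in> t" "(b, z') \<in> t"
  shows "z = z'"
proof -
  have sub: "t \<subseteq> (Om - {a}) \<times> (Om - {a})"
    using tsub[OF t xy] by auto
  have b: "b \<in> Om - {a}" using tsub[OF t xy bz(1)] by blast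
  have "card (nbhd b t) \<le> 1" using semi sub t b unfolding semiregular_on_def by blast
  moreover have "z \<in> nbhd b t" "z' \<in> nbhd b t" using bz unfolding nbhd_def by auto
  moreover have "finite (nbhd b t)" using T.fin_nbhd[OF t] .
  ultimately show ?thesis using card_le_Suc0_iff_eq by (metis One_nat_def)
qed

lemma exist:
  assumes t: "t \<in> T" and xy: "(x, y) \<in> t" and x': "(x', x') \<in> T.cls (x, x)"
  shows "\<exists>z. (x', z) \<in> t"
proof -
  have "card (nbhd x' t) = card (nbhd x t)" by (rule T.const[OF t xy x'])
  moreover have "card (nbhd x t) > 0" using T.fin_nbhd[OF t] xy unfolding nbhd_def
    by (metis card_gt_0_iff empty_iff mem_Collect_eq)
  ultimately have "nbhd x' t \<noteq> {}" by auto
  then show ?thesis unfolding nbhd_def by blast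
qed

end

context ext
begin

lemma stab_trans:
  assumes s: "s \<in> S" and b: "(a, b) \<in> s" and b': "(a, b') \<in> s"
  shows "\<exists>g. aut g \<and> g a = a \<and> g b = b'"
proof (cases "s = Id_on Om")
  case True
  then have "b = a" "b' = a" using b b' by auto
  then show ?thesis using aut_id by auto
next
  case False
  have bO: "b \<in> Om" "b' \<in> Om" using S.sub[OF s] b b' by auto
  have ba: "b \<noteq> a" "b' \<noteq> a" using S_diag_eq[OF s] b b' aO False by auto
  have b'f: "(b', b') \<in> T.cls (b, b)" using fibx[OF bO(1) s b] b' by blast
  define g where "g x = (if x \<notin> Om then x else if x = a then a else (THE z. (b', z) \<in> T.cls (b, x)))" for x
  have gmem: "(b', g x) \<in> T.cls (b, x) \<and> g x \<in> Om - {a}" if x: "x \<in> Om" "x \<noteq> a" for x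
  proof -
    let ?t = "T.cls (b, x)"
    have t: "?t \<in> T" "(b, x) \<in> ?t" using T.cls bO x by auto
    obtain z where z: "(b', z) \<in> ?t" using exist[OF t(1) t(2) b'f] by blast
    have uq: "\<And>z'. (b', z') \<in> ?t \<Longrightarrow> z' = z" using unique2[OF t(1) t(2) ba(1) x(2)] z by blast
    have "(THE z. (b', z) \<in> ?t) = z" using z uq by (rule the_equality)
    then have "(b', THE z. (b', z) \<in> ?t) \<in> ?t" using z by simp
    then have "(b', g x) \<in> ?t" unfolding g_def using x by simp
    moreover then have "g x \<in> Om - {a}" using tsub[OF t(1) t(2) ba(1) x(2)] by blast
    ultimately show ?thesis by blast
  qed
  have ga: "g a = a" unfolding g_def using aO by simp
  have key: "(g x, g y) \<in> T.cls (x, y)" if x: "x \<in> Om" "x \<noteq> a" and y: "y \<in> Om" "y \<noteq> a" for x y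
  proof -
    let ?t1 = "T.cls (b, x)" and ?t2 = "T.cls (b, y)" and ?w = "T.cls (x, y)"
    have t1: "?t1 \<in> T" "(b, x) \<in> ?t1" using T.cls bO x by auto
    have t2: "?t2 \<in> T" "(b, y) \<in> ?t2" using T.cls bO y by auto
    have w: "?w \<in> T" "(x, y) \<in> ?w" using T.cls x y by auto
    have gx: "(b', g x) \<in> ?t1" using gmem x by blast
    have gy: "(b', g y) \<in> ?t2" using gmem y by blast
    have eqc: "card {c. (b, c) \<in> ?t1 \<and> (c, y) \<in> ?w} = card {c. (b', c) \<in> ?t1 \<and> (c, g y) \<in> ?w}"
      by (rule T.inter[OF t1(1) w(1) t2(1) t2(2) gy])
    have "x \<in> {c. (b, c) \<in> ?t1 \<and> (c, y) \<in> ?w}" using t1 w by simp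
    moreover have "finite {c. (b, c) \<in> ?t1 \<and> (c, y) \<in> ?w}" by (rule T.fin_set[OF t1(1)])
    ultimately have "card {c. (b, c) \<in> ?t1 \<and> (c, y) \<in> ?w} > 0" using card_gt_0_iff by blast
    then have "card {c. (b', c) \<in> ?t1 \<and> (c, g y) \<in> ?w} > 0" using eqc by simp
    then have "{c. (b', c) \<in> ?t1 \<and> (c, g y) \<in> ?w} \<noteq> {}" unfolding card_gt_0_iff by blast
    then obtain c where c: "(b', c) \<in> ?t1" "(c, g y) \<in> ?w" by blast
    have "c = g x" using unique2[OF t1(1) t1(2) ba(1) x(2) c(1) gx] .
    then show ?thesis using c by simp
  qed
  have fwd_a: "(a, g y) \<in> u" if u: "u \<in> S" and y: "y \<in> Om" and ay: "(a, y) \<in> u" for u y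
  proof (cases "y = a")
    case True then show ?thesis using ga ay by simp
  next
    case False
    have "(g y, g y) \<in> T.cls (y, y)"
    proof -
      let ?t = "T.cls (b, y)"
      have t: "?t \<in> T" "(b, y) \<in> ?t" using T.cls bO y by auto
      show ?thesis using T.col[OF t(1) t(2)] gmem[OF y False] by blast
    qed
    then show ?thesis using fibx[OF y u ay] by blast
  qed
  have fwd: "(g x, g y) \<in> u" if u: "u \<in> S" and x: "x \<in> Om" and y: "y \<in> Om" and xy: "(x, y) \<in> u" for u x y
  proof (cases "x = a")
    case True then show ?thesis using fwd_a u y xy ga by simp
  next
    case xa: False
    show ?thesis
    proof (cases "y = a")
      case True
      have "(a, x) \<in> u\<inverse>" using xy True by simp
      then have "(a, g x) \<in> u\<inverse>" using fwd_a[OF S.conv[OF u] x] by blast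
      then show ?thesis using True ga by simp
    next
      case False
      have "T.cls (x, y) \<subseteq> u" using T.union_closed[OF TU[OF u] xy] x y by blast
      then show ?thesis using key[OF x xa y False] by blast
    qed
  qed
  have img: "g ` Om \<subseteq> Om" using gmem ga unfolding g_def by auto
  have inj: "inj_on g Om"
  proof (rule inj_onI)
    fix x y assume x: "x \<in> Om" and y: "y \<in> Om" and e: "g x = g y"
    show "x = y"
    proof (cases "x = a \<or> y = a")
      case True
      show ?thesis
      proof (rule ccontr)
        assume ne: "x \<noteq> y"
        show False
        proof (cases "x = a")
          case True
          then have "y \<noteq> a" using ne by simp
          then have "g y \<noteq> a" using gmem y by blast
          then show False using e ga True by simp
        next
          case False
          then have "y = a" using \<open>x = a \<or> y = a\<close> by simp
          have "g x \<noteq> a" using gmem x False by blast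
          then show False using e ga \<open>y = a\<close> by simp
        qed
      qed
    next
      case False
      have k: "(g x, g y) \<in> T.cls (x, y)" using key x y False by blast
      have gxO: "g x \<in> Om" using img x by blast
      have gI: "(g x, g y) \<in> Id_on Om" using Id_onI[OF gxO] e by simp
      have c: "T.cls (x, y) \<in> T" "(x, y) \<in> T.cls (x, y)" using T.cls[of "(x, y)"] x y by auto
      have "T.cls (x, y) \<subseteq> Id_on Om"
        by (rule T.union_sub[OF T.diagU c(1) k gI])
      then have "(x, y) \<in> Id_on Om" using c(2) by blast
      then show ?thesis by (auto simp: Id_on_iff)
    qed
  qed
  have bij: "bij_betw g Om Om" unfolding bij_betw_def
    using inj endo_inj_surj[OF T.fin img inj] by blast
  have "aut g" unfolding aut_def
  proof (intro conjI allI impI ballI)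
    show "bij_betw g Om Om" by (rule bij)
    fix x assume "x \<notin> Om" then show "g x = x" unfolding g_def by simp
  next
    fix u x y assume uxy: "u \<in> S" "x \<in> Om" "y \<in> Om"
    have fwd': "\<And>u x y. u \<in> S \<Longrightarrow> x \<in> Om \<Longrightarrow> y \<in> Om \<Longrightarrow> (x, y) \<in> u \<Longrightarrow> (g x, g y) \<in> u"
      using fwd by blast
    show "(x, y) \<in> u \<longleftrightarrow> (g x, g y) \<in> u" by (rule aut_fwd_iff[OF img fwd' uxy])
  qed
  moreover have "g b = b'"
  proof -
    have t: "T.cls (b, b) \<in> T" "(b, b) \<in> T.cls (b, b)" using T.cls bO by auto
    have "(b', g b) \<in> T.cls (b, b)" using gmem bO ba by blast
    then show ?thesis using unique2[OF t ba(1) ba(1) _ b'f] by blast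
  qed
  ultimately show ?thesis using ga by blast
qed

end

context ext
begin

lemma aut_preserves_T:
  assumes g: "aut g" and ga: "g a = a" and t: "t \<in> T" and p: "(x, y) \<in> t"
  shows "(g x, g y) \<in> t"
proof -
  have bij: "bij_betw g Om Om" and gout: "\<And>x. x \<notin> Om \<Longrightarrow> g x = x"
    and gs: "\<And>s x y. s \<in> S \<Longrightarrow> x \<in> Om \<Longrightarrow> y \<in> Om \<Longrightarrow> (x, y) \<in> s \<longleftrightarrow> (g x, g y) \<in> s"
    using g unfolding aut_def by blast+
  have inj: "inj_on g Om" and img: "g ` Om = Om" using bij unfolding bij_betw_def by auto
  define gg where "gg p = (g (fst p), g (snd p))" for p
  have ggO: "gg p \<in> Om \<times> Om" if "p \<in> Om \<times> Om" for p using that img unfolding gg_def by auto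
  define R where "R = {(p, q). \<exists>t\<in>T. p \<in> t \<and> q \<in> t} \<union> {(p, gg p) | p. p \<in> Om \<times> Om} \<union> {(gg p, p) | p. p \<in> Om \<times> Om}"
  have RT: "(p, q) \<in> R" if "t \<in> T" "p \<in> t" "q \<in> t" for t p q using that unfolding R_def by blast
  have Rg: "(p, gg p) \<in> R" "(gg p, p) \<in> R" if "p \<in> Om \<times> Om" for p using that unfolding R_def by blast+
  have Rcases: "P" if "(p, q) \<in> R"
      "\<And>t. t \<in> T \<Longrightarrow> p \<in> t \<Longrightarrow> q \<in> t \<Longrightarrow> P"
      "p \<in> Om \<times> Om \<Longrightarrow> q = gg p \<Longrightarrow> P"
      "q \<in> Om \<times> Om \<Longrightarrow> p = gg q \<Longrightarrow> P" for p q P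
    using that unfolding R_def by blast
  have Rsub: "R \<subseteq> (Om \<times> Om) \<times> (Om \<times> Om)"
  proof
    fix pq assume "pq \<in> R"
    then obtain p q where pq: "pq = (p, q)" "(p, q) \<in> R" by (cases pq) auto
    show "pq \<in> (Om \<times> Om) \<times> (Om \<times> Om)"
    proof (rule Rcases[OF pq(2)])
      fix t assume "t \<in> T" "p \<in> t" "q \<in> t"
      then have "p \<in> Om \<times> Om" "q \<in> Om \<times> Om" using T.sub by blast+
      then show ?thesis using pq(1) by simp
    next
      assume "p \<in> Om \<times> Om" "q = gg p"
      then show ?thesis using ggO[of p] pq(1) by simp
    next
      assume "q \<in> Om \<times> Om" "p = gg q"
      then show ?thesis using ggO[of q] pq(1) by simp
    qed
  qed
  have Rrefl: "(p, p) \<in> R" if "p \<in> Om \<times> Om" for p using T.cls[OF that] RT by blast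
  have Rsym: "(q, p) \<in> R" if "(p, q) \<in> R" for p q
    by (rule Rcases[OF that]) (auto intro: RT Rg)
  have swapgg: "prod.swap (gg p) = gg (prod.swap p)" for p unfolding gg_def by (cases p) simp
  have Rswap: "(prod.swap p, prod.swap q) \<in> R" if pq: "(p, q) \<in> R" for p q
  proof (rule Rcases[OF pq])
    fix t assume tt: "t \<in> T" "p \<in> t" "q \<in> t"
    have sp: "prod.swap p \<in> t\<inverse>" using tt(2) by (cases p) simp
    have sq: "prod.swap q \<in> t\<inverse>" using tt(3) by (cases q) simp
    show ?thesis by (rule RT[OF T.conv[OF tt(1)] sp sq])
  next
    assume h: "p \<in> Om \<times> Om" "q = gg p"
    have sp: "prod.swap p \<in> Om \<times> Om" using h(1) by (cases p) simp
    have "(prod.swap p, gg (prod.swap p)) \<in> R" by (rule Rg(1)[OF sp])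
    then show ?thesis using h(2) swapgg[of p] by simp
  next
    assume h: "q \<in> Om \<times> Om" "p = gg q"
    have sq: "prod.swap q \<in> Om \<times> Om" using h(1) by (cases q) simp
    have "(gg (prod.swap q), prod.swap q) \<in> R" by (rule Rg(2)[OF sq])
    then show ?thesis using h(2) swapgg[of q] by simp
  qed
  have ggdiag: "fst (gg p) = snd (gg p) \<longleftrightarrow> fst p = snd p" if "p \<in> Om \<times> Om" for p
    using that inj unfolding gg_def inj_on_def by (cases p) auto
  have Rdiag: "fst q = snd q" if pq: "(p, q) \<in> R" and pd: "fst p = snd p" for p q
  proof (rule Rcases[OF pq])
    fix t assume tt: "t \<in> T" "p \<in> t" "q \<in> t"
    have "p \<in> Om \<times> Om" using T.sub tt by blast
    then have "p \<in> Id_on Om" using pd by (cases p) (auto simp: Id_on_def)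
    then have "t \<subseteq> Id_on Om" using T.union_sub[OF T.diagU tt(1) tt(2)] by blast
    then show ?thesis using tt(3) by (auto simp: Id_on_def)
  next
    assume "p \<in> Om \<times> Om" "q = gg p" then show ?thesis using ggdiag pd by simp
  next
    assume "q \<in> Om \<times> Om" "p = gg q" then show ?thesis using ggdiag pd by simp
  qed
  let ?P = "(Om \<times> Om) // (R\<^sup>+)"
  have xT: "union_of T x" if x: "x \<in> ?P" for x
  proof -
    have xO: "x \<subseteq> Om \<times> Om" using quot_sub[OF Rsub x] .
    show ?thesis unfolding union_of_def
    proof
      show "x \<subseteq> \<Union>{t \<in> T. t \<subseteq> x}"
      proof
        fix u assume u: "u \<in> x"
        then have uO: "u \<in> Om \<times> Om" using xO by blast
        have "T.cls u \<subseteq> x"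
        proof
          fix w assume "w \<in> T.cls u"
          then have "(u, w) \<in> R" using RT T.cls[OF uO] by blast
          then show "w \<in> x" using quot_class_closed[OF x _ u] by blast
        qed
        then show "u \<in> \<Union>{t \<in> T. t \<subseteq> x}" using T.cls[OF uO] by blast
      qed
    qed blast
  qed
  have xg: "u \<in> x \<longleftrightarrow> gg u \<in> x" if x: "x \<in> ?P" and u: "u \<in> Om \<times> Om" for x u
    using quot_class_closed[OF x Rg(1)[OF u]] quot_class_closed[OF x Rg(2)[OF u]] by blast
  have gcard: "card {b. (g a1, b) \<in> x \<and> (b, g c1) \<in> y} = card {b. (a1, b) \<in> x \<and> (b, c1) \<in> y}"
    if x: "x \<in> ?P" and y: "y \<in> ?P" and ac: "a1 \<in> Om" "c1 \<in> Om" for x y a1 c1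
  proof -
    have xO: "x \<subseteq> Om \<times> Om" using quot_sub[OF Rsub x] .
    have e: "gg (u, v) = (g u, g v)" for u v unfolding gg_def by simp
    have ix: "(u, v) \<in> x \<longleftrightarrow> (g u, g v) \<in> x" if "u \<in> Om" "v \<in> Om" for u v
      using xg[OF x, of "(u, v)"] that e by simp
    have iy: "(u, v) \<in> y \<longleftrightarrow> (g u, g v) \<in> y" if "u \<in> Om" "v \<in> Om" for u v
      using xg[OF y, of "(u, v)"] that e by simp
    let ?A = "{b. (a1, b) \<in> x \<and> (b, c1) \<in> y}"
    have AO: "?A \<subseteq> Om" using xO by blast
    have "{b. (g a1, b) \<in> x \<and> (b, g c1) \<in> y} = g ` ?A"
    proof
      show "{b. (g a1, b) \<in> x \<and> (b, g c1) \<in> y} \<subseteq> g ` ?A"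
      proof
        fix b assume b: "b \<in> {b. (g a1, b) \<in> x \<and> (b, g c1) \<in> y}"
        then have bx: "(g a1, b) \<in> x" and by': "(b, g c1) \<in> y" by auto
        have "b \<in> Om" using bx xO by blast
        then obtain b0 where b0: "b0 \<in> Om" "b = g b0" using img by blast
        have "(a1, b0) \<in> x" using ix[OF ac(1) b0(1)] bx b0(2) by simp
        moreover have "(b0, c1) \<in> y" using iy[OF b0(1) ac(2)] by' b0(2) by simp
        ultimately have "b0 \<in> ?A" by simp
        then show "b \<in> g ` ?A" using b0(2) by blast
      qed
      show "g ` ?A \<subseteq> {b. (g a1, b) \<in> x \<and> (b, g c1) \<in> y}"
      proof
        fix b assume "b \<in> g ` ?A"
        then obtain b0 where b0: "b = g b0" "b0 \<in> ?A" by blast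
        then have b0x: "(a1, b0) \<in> x" and b0y: "(b0, c1) \<in> y" by auto
        have b0O: "b0 \<in> Om" using b0(2) AO by blast
        have "(g a1, b) \<in> x" using ix[OF ac(1) b0O] b0x b0(1) by simp
        moreover have "(b, g c1) \<in> y" using iy[OF b0O ac(2)] b0y b0(1) by simp
        ultimately show "b \<in> {b. (g a1, b) \<in> x \<and> (b, g c1) \<in> y}" by simp
      qed
    qed
    moreover have "inj_on g ?A" by (rule inj_on_subset[OF inj AO])
    ultimately show ?thesis by (simp add: card_image)
  qed
  have Rinv: "card {b. (fst p, b) \<in> x \<and> (b, snd p) \<in> y} = card {b. (fst q, b) \<in> x \<and> (b, snd q) \<in> y}"
    if xy: "x \<in> ?P" "y \<in> ?P" and pq: "(p, q) \<in> R" for x y p q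
  proof (rule Rcases[OF pq])
    fix t assume tt: "t \<in> T" "p \<in> t" "q \<in> t"
    have "(fst p, snd p) \<in> t" "(fst q, snd q) \<in> t" using tt by auto
    from T.sum[OF xT[OF xy(1)] xT[OF xy(2)] tt(1) this] show ?thesis .
  next
    assume "p \<in> Om \<times> Om" "q = gg p"
    then show ?thesis using gcard[OF xy, of "fst p" "snd p"] unfolding gg_def by auto
  next
    assume "q \<in> Om \<times> Om" "p = gg q"
    then show ?thesis using gcard[OF xy, of "fst q" "snd q"] unfolding gg_def by auto
  qed
  have Pcc: "coherent_config Om ?P"
    by (rule quot_coherent[OF T.fin Rsub Rrefl Rsym Rswap Rdiag Rinv])
  have Padm: "extension_admissible Om S a ?P" unfolding extension_admissible_def
  proof (intro conjI ballI)
    show "coherent_config Om ?P" by (rule Pcc)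
    show "union_of ?P {(a, a)}"
    proof (rule quot_union[OF Rrefl])
      show "{(a, a)} \<subseteq> Om \<times> Om" using aO by blast
    next
      fix p q assume pq: "(p, q) \<in> R" and pa: "p \<in> {(a, a)}"
      show "q \<in> {(a, a)}"
      proof (rule Rcases[OF pq])
        fix t assume tt: "t \<in> T" "p \<in> t" "q \<in> t"
        then have "t \<subseteq> {(a, a)}" using T.union_sub[OF TUa] pa by blast
        then show ?thesis using tt by blast
      next
        assume "p \<in> Om \<times> Om" "q = gg p" then show ?thesis using pa ga unfolding gg_def by simp
      next
        assume q: "q \<in> Om \<times> Om" "p = gg q"
        then have "g (fst q) = g a" "g (snd q) = g a" using pa ga unfolding gg_def by auto
        then have "fst q = a" "snd q = a" using inj q(1) aO unfolding inj_on_def by auto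
        then show ?thesis by (cases q) simp
      qed
    qed
  next
    fix s assume s: "s \<in> S"
    show "union_of ?P s"
    proof (rule quot_union[OF Rrefl])
      show "s \<subseteq> Om \<times> Om" using S.sub s by blast
    next
      fix p q assume pq: "(p, q) \<in> R" and ps: "p \<in> s"
      show "q \<in> s"
      proof (rule Rcases[OF pq])
        fix t assume tt: "t \<in> T" "p \<in> t" "q \<in> t"
        then have "t \<subseteq> s" using T.union_sub[OF TU[OF s]] ps by blast
        then show ?thesis using tt by blast
      next
        assume "p \<in> Om \<times> Om" "q = gg p" then show ?thesis using gs[OF s] ps unfolding gg_def by (cases p) auto
      next
        assume "q \<in> Om \<times> Om" "p = gg q" then show ?thesis using gs[OF s] ps unfolding gg_def by (cases q) auto
      qed
    qed
  qed
  have tU: "union_of ?P t" using isext Padm t unfolding is_alpha_extension_def by blast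
  have xyO: "(x, y) \<in> Om \<times> Om" using T.sub t p by blast
  obtain c where c: "c \<in> ?P" "c \<subseteq> t" "(x, y) \<in> c" using tU p unfolding union_of_def by blast
  have "gg (x, y) \<in> c" using quot_class_closed[OF c(1) Rg(1)[OF xyO] c(3)] .
  then show ?thesis using c(2) unfolding gg_def by auto
qed

lemma stab_fix:
  assumes g: "aut g" and ga: "g a = a" and b: "b \<in> Om" "b \<noteq> a" and gb: "g b = b"
  shows "g = id"
proof
  fix y
  show "g y = id y"
  proof (cases "y \<in> Om - {a}")
    case True
    let ?t = "T.cls (b, y)"
    have t: "?t \<in> T" "(b, y) \<in> ?t" using T.cls b True by auto
    have "(g b, g y) \<in> ?t" using aut_preserves_T[OF g ga t] .
    then have bg: "(b, g y) \<in> ?t" using gb by simp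
    have ya: "y \<noteq> a" using True by blast
    have "y = g y" by (rule unique2[OF t(1) t(2) b(2) ya t(2) bg])
    then show ?thesis by simp
  next
    case False
    then show ?thesis using ga g unfolding aut_def by auto
  qed
qed

end

context main
begin

lemma ext_at: assumes a: "a \<in> Om" obtains T where "ext Om S a T"
proof -
  obtain T where T: "is_alpha_extension Om S a T" using ext_exists[OF S.cc a] by blast
  have "ext Om S a T"
    by (intro ext.intro ext_axioms.intro) (rule main_axioms, rule a, rule T)
  then show ?thesis by (rule that)
qed

lemma stab_trans_m:
  assumes a: "a \<in> Om" and s: "s \<in> S" and b: "(a, b) \<in> s" and b': "(a, b') \<in> s"
  shows "\<exists>g. aut g \<and> g a = a \<and> g b = b'"
proof -
  obtain T where "ext Om S a T" using ext_at[OF a] by blast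
  then interpret E: ext Om S a T .
  show ?thesis by (rule E.stab_trans[OF s b b'])
qed

lemma stab_fix_m:
  assumes g: "aut g" and a: "a \<in> Om" and b: "b \<in> Om" "b \<noteq> a" and ga: "g a = a" and gb: "g b = b"
  shows "g = id"
proof -
  obtain T where "ext Om S a T" using ext_at[OF a] by blast
  then interpret E: ext Om S a T .
  show ?thesis by (rule E.stab_fix[OF g ga b gb])
qed

lemma aut_in: "aut g \<Longrightarrow> x \<in> Om \<Longrightarrow> g x \<in> Om"
  unfolding aut_def bij_betw_def by blast

lemma aut_out: "aut g \<Longrightarrow> x \<notin> Om \<Longrightarrow> g x = x"
  unfolding aut_def by blast

lemma aut_rel: "aut g \<Longrightarrow> s \<in> S \<Longrightarrow> x \<in> Om \<Longrightarrow> y \<in> Om \<Longrightarrow> (x, y) \<in> s \<longleftrightarrow> (g x, g y) \<in> s"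
  unfolding aut_def by blast

lemma aut_comp: assumes g: "aut g" and h: "aut h" shows "aut (g \<circ> h)"
  unfolding aut_def
proof (intro conjI allI impI ballI)
  have "bij_betw h Om Om" "bij_betw g Om Om" using g h unfolding aut_def by blast+
  then show "bij_betw (g \<circ> h) Om Om" by (rule bij_betw_trans)
next
  fix x assume "x \<notin> Om" then show "(g \<circ> h) x = x" using aut_out[OF g] aut_out[OF h] by simp
next
  fix s x y assume "s \<in> S" "x \<in> Om" "y \<in> Om"
  then have "(x, y) \<in> s \<longleftrightarrow> (h x, h y) \<in> s" "(h x, h y) \<in> s \<longleftrightarrow> (g (h x), g (h y)) \<in> s"
    using aut_rel[OF h] aut_rel[OF g] aut_in[OF h] by blast+
  then show "(x, y) \<in> s \<longleftrightarrow> ((g \<circ> h) x, (g \<circ> h) y) \<in> s" by simp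
qed

lemma aut_bij: assumes g: "aut g" shows "bij g"
proof -
  have bo: "bij_betw g Om Om" using g unfolding aut_def by blast
  have inj: "inj g"
  proof (rule injI)
    fix x y assume e: "g x = g y"
    show "x = y"
    proof (cases "x \<in> Om"; cases "y \<in> Om")
      assume "x \<in> Om" "y \<in> Om" then show ?thesis using bo e unfolding bij_betw_def inj_on_def by blast
    next
      assume "x \<in> Om" "y \<notin> Om" then show ?thesis using e aut_in[OF g, of x] aut_out[OF g, of y] by simp
    next
      assume "x \<notin> Om" "y \<in> Om" then show ?thesis using e aut_in[OF g, of y] aut_out[OF g, of x] by simp
    next
      assume "x \<notin> Om" "y \<notin> Om" then show ?thesis using e aut_out[OF g, of x] aut_out[OF g, of y] by simp
    qed
  qed
  have surj: "surj g"
  proof -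
    have "y \<in> range g" for y
    proof (cases "y \<in> Om")
      case True then show ?thesis using bo unfolding bij_betw_def by blast
    next
      case False then have "g y = y" using aut_out[OF g, of y] by simp
      then show ?thesis by (metis rangeI)
    qed
    then show ?thesis by blast
  qed
  show ?thesis using inj surj by (rule bijI)
qed

lemma aut_inv: assumes g: "aut g" shows "aut (inv g)" "g \<circ> inv g = id" "inv g \<circ> g = id"
proof -
  have b: "bij g" by (rule aut_bij[OF g])
  have gi: "g (inv g x) = x" for x using b by (simp add: bij_is_surj surj_f_inv_f)
  have ig: "inv g (g x) = x" for x using b by (simp add: bij_is_inj inv_f_f)
  have iO: "inv g x \<in> Om" if "x \<in> Om" for x
  proof (rule ccontr)
    assume "inv g x \<notin> Om"
    then have "g (inv g x) = inv g x" by (rule aut_out[OF g])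
    then show False using gi[of x] that \<open>inv g x \<notin> Om\<close> by simp
  qed
  show "g \<circ> inv g = id" using gi by auto
  show "inv g \<circ> g = id" using ig by auto
  show "aut (inv g)" unfolding aut_def
  proof (intro conjI allI impI ballI)
    have "inj_on (inv g) Om" by (metis gi inj_onI)
    moreover have "inv g ` Om = Om"
    proof
      show "inv g ` Om \<subseteq> Om" using iO by blast
      show "Om \<subseteq> inv g ` Om"
      proof
        fix x assume "x \<in> Om"
        then have "g x \<in> Om" by (rule aut_in[OF g])
        moreover have "x = inv g (g x)" using ig by simp
        ultimately show "x \<in> inv g ` Om" by blast
      qed
    qed
    ultimately show "bij_betw (inv g) Om Om" unfolding bij_betw_def by blast
  next
    fix x assume "x \<notin> Om"
    then have "g x = x" by (rule aut_out[OF g])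
    then show "inv g x = x" using ig[of x] by simp
  next
    fix s x y assume sxy: "s \<in> S" "x \<in> Om" "y \<in> Om"
    have "(inv g x, inv g y) \<in> s \<longleftrightarrow> (g (inv g x), g (inv g y)) \<in> s"
      by (rule aut_rel[OF g sxy(1) iO[OF sxy(2)] iO[OF sxy(3)]])
    then show "(x, y) \<in> s \<longleftrightarrow> (inv g x, inv g y) \<in> s" using gi by simp
  qed
qed

lemma finG: "finite {g. aut g}"
proof -
  have "inj_on (\<lambda>g. restrict g Om) {g. aut g}"
  proof (rule inj_onI)
    fix g h assume g: "g \<in> {g. aut g}" and h: "h \<in> {g. aut g}" and e: "restrict g Om = restrict h Om"
    show "g = h"
    proof
      fix x show "g x = h x"
      proof (cases "x \<in> Om")
        case True then show ?thesis using e by (metis restrict_apply')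
      next
        case False
        have "aut g" "aut h" using g h by auto
        then show ?thesis using aut_out[of g x] aut_out[of h x] False by simp
      qed
    qed
  qed
  moreover have "(\<lambda>g. restrict g Om) ` {g. aut g} \<subseteq> Om \<rightarrow>\<^sub>E Om"
    using aut_in by auto
  moreover have "finite (Om \<rightarrow>\<^sub>E Om)" using S.fin by (simp add: finite_PiE)
  ultimately have "finite ((\<lambda>g. restrict g Om) ` {g. aut g})" "inj_on (\<lambda>g. restrict g Om) {g. aut g}"
    using finite_subset by blast+
  then show ?thesis by (rule finite_imageD)
qed

end

locale nonreg = main +
  fixes a0 s0
  assumes a0: "a0 \<in> Om" and s0: "s0 \<in> S" and k2: "2 \<le> card (nbhd a0 s0)"
begin

abbreviation "G \<equiv> {g. aut g}"
definition "Stab d = {g \<in> G. g d = d}"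
definition "Orb d = (\<lambda>g. g d) ` G"
abbreviation "k \<equiv> card (nbhd a0 s0)"

lemma val: assumes d: "d \<in> Om" and s: "s \<in> S" shows "card (nbhd d s) = card (nbhd a0 s)"
proof -
  have "(d, d) \<in> Id_on Om" "(a0, a0) \<in> Id_on Om" using d a0 by auto
  from S.inter[OF s S.conv[OF s] IdS this]
  show ?thesis unfolding nbhd_def by simp
qed

lemma s0ne: "s0 \<noteq> Id_on Om"
proof
  assume "s0 = Id_on Om"
  then have "nbhd a0 s0 = {a0}" using a0 unfolding nbhd_def by auto
  then show False using k2 by simp
qed

lemma nb: assumes d: "d \<in> Om" obtains b where "(d, b) \<in> s0" "b \<noteq> d" "b \<in> Om"
proof -
  have "card (nbhd d s0) \<ge> 2" using val[OF d s0] k2 by simp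
  then have "nbhd d s0 \<noteq> {}" by auto
  then obtain b where b: "(d, b) \<in> s0" unfolding nbhd_def by blast
  have "b \<noteq> d" using S_diag_eq[OF s0] b d s0ne by blast
  moreover have "b \<in> Om" using S.sub[OF s0] b by blast
  ultimately show ?thesis using that b by blast
qed

lemma aut_cancel: assumes g: "aut g" and h: "aut h" and e: "inv h \<circ> g = id" shows "g = h"
proof -
  have "g = (h \<circ> inv h) \<circ> g" using aut_inv(2)[OF h] by simp
  also have "\<dots> = h \<circ> (inv h \<circ> g)" by (simp add: comp_assoc)
  finally show ?thesis using e by simp
qed

lemma stab_card: assumes d: "d \<in> Om" shows "card (Stab d) = k"
proof -
  obtain b where b: "(d, b) \<in> s0" "b \<noteq> d" "b \<in> Om" using nb[OF d] by blast
  have "bij_betw (\<lambda>g. g b) (Stab d) (nbhd d s0)"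
    unfolding bij_betw_def
  proof (intro conjI)
    show "inj_on (\<lambda>g. g b) (Stab d)"
    proof (rule inj_onI)
      fix g h assume g: "g \<in> Stab d" and h: "h \<in> Stab d" and e: "g b = h b"
      have ga: "aut g" "g d = d" and ha: "aut h" "h d = d" using g h unfolding Stab_def by auto
      let ?f = "inv h \<circ> g"
      have f: "aut ?f" using aut_comp[OF aut_inv(1)[OF ha(1)] ga(1)] .
      have ihh: "inv h (h x) = x" for x using aut_inv(3)[OF ha(1)] by (metis comp_apply id_apply)
      have "?f d = d" using ga(2) ha(2) ihh[of d] by simp
      moreover have "?f b = b" using e ihh[of b] by simp
      ultimately have "?f = id" using stab_fix_m[OF f d b(3) b(2)] by blast
      then show "g = h" by (rule aut_cancel[OF ga(1) ha(1)])
    qed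
    show "(\<lambda>g. g b) ` Stab d = nbhd d s0"
    proof
      show "(\<lambda>g. g b) ` Stab d \<subseteq> nbhd d s0"
      proof
        fix y assume "y \<in> (\<lambda>g. g b) ` Stab d"
        then obtain g where g: "aut g" "g d = d" "y = g b" unfolding Stab_def by blast
        have "(g d, g b) \<in> s0" using aut_rel[OF g(1) s0 d b(3)] b(1) by blast
        then show "y \<in> nbhd d s0" using g unfolding nbhd_def by simp
      qed
      show "nbhd d s0 \<subseteq> (\<lambda>g. g b) ` Stab d"
      proof
        fix y assume "y \<in> nbhd d s0"
        then have y: "(d, y) \<in> s0" unfolding nbhd_def by simp
        obtain g where "aut g" "g d = d" "g b = y" using stab_trans_m[OF d s0 b(1) y] by blast
        then show "y \<in> (\<lambda>g. g b) ` Stab d" unfolding Stab_def by force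
      qed
    qed
  qed
  then have "card (Stab d) = card (nbhd d s0)" by (rule bij_betw_same_card)
  then show ?thesis using val[OF d s0] by simp
qed

lemma fiber_card: assumes d: "d \<in> Om" and g0: "aut g0" shows "card {g \<in> G. g d = g0 d} = k"
proof -
  have ig0: "inv g0 (g0 x) = x" for x using aut_inv(3)[OF g0] by (metis comp_apply id_apply)
  have g0i: "g0 (inv g0 x) = x" for x using aut_inv(2)[OF g0] by (metis comp_apply id_apply)
  have "bij_betw (\<lambda>h. g0 \<circ> h) (Stab d) {g \<in> G. g d = g0 d}"
    unfolding bij_betw_def
  proof (intro conjI)
    show "inj_on (\<lambda>h. g0 \<circ> h) (Stab d)"
    proof (rule inj_onI)
      fix h1 h2 assume "g0 \<circ> h1 = g0 \<circ> h2"
      then have "inv g0 \<circ> (g0 \<circ> h1) = inv g0 \<circ> (g0 \<circ> h2)" by simp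
      then show "h1 = h2" using aut_inv(3)[OF g0] by (simp add: comp_assoc[symmetric])
    qed
    show "(\<lambda>h. g0 \<circ> h) ` Stab d = {g \<in> G. g d = g0 d}"
    proof
      show "(\<lambda>h. g0 \<circ> h) ` Stab d \<subseteq> {g \<in> G. g d = g0 d}"
        unfolding Stab_def using aut_comp[OF g0] by auto
      show "{g \<in> G. g d = g0 d} \<subseteq> (\<lambda>h. g0 \<circ> h) ` Stab d"
      proof
        fix g assume g: "g \<in> {g \<in> G. g d = g0 d}"
        then have ga: "aut g" "g d = g0 d" by auto
        let ?h = "inv g0 \<circ> g"
        have "aut ?h" using aut_comp[OF aut_inv(1)[OF g0] ga(1)] .
        moreover have "?h d = d" using ga(2) ig0 by simp
        ultimately have "?h \<in> Stab d" unfolding Stab_def by simp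
        moreover have "g = g0 \<circ> ?h" using aut_inv(2)[OF g0] by (simp add: comp_assoc[symmetric])
        ultimately show "g \<in> (\<lambda>h. g0 \<circ> h) ` Stab d" by blast
      qed
    qed
  qed
  then have "card (Stab d) = card {g \<in> G. g d = g0 d}" by (rule bij_betw_same_card)
  then show ?thesis using stab_card[OF d] by simp
qed

lemma orbit_card: assumes d: "d \<in> Om" shows "card G = card (Orb d) * k"
proof -
  have GU: "G = (\<Union>y\<in>Orb d. {g \<in> G. g d = y})" unfolding Orb_def by blast
  have fin_orb: "finite (Orb d)" unfolding Orb_def using finG by simp
  have "card (\<Union>y\<in>Orb d. {g \<in> G. g d = y}) = (\<Sum>y\<in>Orb d. card {g \<in> G. g d = y})"
  proof (rule card_UN_disjoint[OF fin_orb])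
    show "\<forall>i\<in>Orb d. finite {g \<in> G. g d = i}" using finG by simp
    show "\<forall>i\<in>Orb d. \<forall>j\<in>Orb d. i \<noteq> j \<longrightarrow> {g \<in> G. g d = i} \<inter> {g \<in> G. g d = j} = {}" by blast
  qed
  also have "\<dots> = (\<Sum>y\<in>Orb d. k)"
  proof (rule sum.cong)
    fix y assume "y \<in> Orb d"
    then obtain g0 where g0: "aut g0" "y = g0 d" unfolding Orb_def by blast
    show "card {g \<in> G. g d = y} = k" using fiber_card[OF d g0(1)] g0(2) by simp
  qed simp
  finally show ?thesis using GU by simp
qed

lemma fp_bound: "card Om * (k - 1) + 1 \<le> card G"
proof -
  let ?F = "\<Union>d\<in>Om. (Stab d - {id})"
  have idG: "id \<in> G" using aut_id by simp
  have finS: "finite (Stab d - {id})" for d unfolding Stab_def using finG by simp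
  have "card ?F = (\<Sum>d\<in>Om. card (Stab d - {id}))"
  proof (rule card_UN_disjoint[OF S.fin])
    show "\<forall>i\<in>Om. finite (Stab i - {id})" using finS by blast
    show "\<forall>i\<in>Om. \<forall>j\<in>Om. i \<noteq> j \<longrightarrow> (Stab i - {id}) \<inter> (Stab j - {id}) = {}"
    proof (intro ballI impI)
      fix i j assume ij: "i \<in> Om" "j \<in> Om" "i \<noteq> j"
      show "(Stab i - {id}) \<inter> (Stab j - {id}) = {}"
      proof (rule ccontr)
        assume "(Stab i - {id}) \<inter> (Stab j - {id}) \<noteq> {}"
        then obtain g where g: "aut g" "g i = i" "g j = j" "g \<noteq> id" unfolding Stab_def by blast
        have "g = id" using stab_fix_m[OF g(1) ij(1) ij(2)] ij(3) g(2,3) by metis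
        then show False using g(4) by simp
      qed
    qed
  qed
  also have "\<dots> = (\<Sum>d\<in>Om. k - 1)"
  proof (rule sum.cong)
    fix d assume d: "d \<in> Om"
    have "id \<in> Stab d" unfolding Stab_def using aut_id by simp
    then show "card (Stab d - {id}) = k - 1" using stab_card[OF d] by (simp add: card_Diff_singleton)
  qed simp
  finally have cF: "card ?F = card Om * (k - 1)" by simp
  have "?F \<subseteq> G - {id}" unfolding Stab_def by blast
  then have "card ?F \<le> card (G - {id})" using finG by (intro card_mono) auto
  also have "\<dots> = card G - 1" using idG finG by (simp add: card_Diff_singleton)
  finally have "card Om * (k - 1) \<le> card G - 1" using cF by simp
  moreover have "card G \<ge> 1" using idG finG by (metis One_nat_def card_0_eq empty_iff not_less_eq_eq le_0_eq)
  ultimately show ?thesis by linarith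
qed

lemma transitive: assumes d: "d \<in> Om" shows "d \<in> Orb a0"
proof (rule ccontr)
  assume nd: "d \<notin> Orb a0"
  have disj: "Orb a0 \<inter> Orb d = {}"
  proof (rule ccontr)
    assume "Orb a0 \<inter> Orb d \<noteq> {}"
    then obtain g h where gh: "aut g" "aut h" "g a0 = h d" unfolding Orb_def by blast
    have ihh: "inv h (h x) = x" for x using aut_inv(3)[OF gh(2)] by (metis comp_apply id_apply)
    have "aut (inv h \<circ> g)" using aut_comp[OF aut_inv(1)[OF gh(2)] gh(1)] .
    moreover have "(inv h \<circ> g) a0 = d" using gh(3) ihh by simp
    ultimately have "d \<in> Orb a0" unfolding Orb_def
      by (intro image_eqI[where x="inv h \<circ> g"]) auto
    then show False using nd by simp
  qed
  have sub: "Orb a0 \<union> Orb d \<subseteq> Om" unfolding Orb_def using aut_in a0 d by auto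
  have "card (Orb a0) + card (Orb d) = card (Orb a0 \<union> Orb d)"
    using disj finG unfolding Orb_def by (simp add: card_Un_disjoint)
  also have "\<dots> \<le> card Om" using sub S.fin by (rule card_mono[rotated])
  finally have c: "card (Orb a0) + card (Orb d) \<le> card Om" .
  have "2 * card G = (card (Orb a0) + card (Orb d)) * k"
    using orbit_card[OF a0] orbit_card[OF d] by (simp add: algebra_simps)
  also have "\<dots> \<le> card Om * k" using c by (rule mult_right_mono) simp
  finally have A: "2 * card G \<le> card Om * k" .
  obtain m where m: "k = m + 2" using k2 by (metis add.commute le_Suc_ex)
  have B: "card Om * (m + 1) + 1 \<le> card G" using fp_bound m by simp
  from A B m show False by (simp add: algebra_simps)
qed

end

context nonreg
begin

lemma trans_pair: assumes x: "x \<in> Om" and y: "y \<in> Om" shows "\<exists>g. aut g \<and> g x = y"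
proof -
  obtain g1 where g1: "aut g1" "g1 a0 = x" using transitive[OF x] unfolding Orb_def by blast
  obtain g2 where g2: "aut g2" "g2 a0 = y" using transitive[OF y] unfolding Orb_def by blast
  have ig: "inv g1 (g1 z) = z" for z using aut_inv(3)[OF g1(1)] by (metis comp_apply id_apply)
  have "aut (g2 \<circ> inv g1)" using aut_comp[OF g2(1) aut_inv(1)[OF g1(1)]] .
  moreover have "(g2 \<circ> inv g1) x = y" using g1(2) g2(2) ig[of a0] by simp
  ultimately show ?thesis by blast
qed

lemma frob_group: "frobenius_group Om G"
  unfolding frobenius_group_def
proof (intro conjI)
  show "perm_group Om G" unfolding perm_group_def
  proof (intro conjI)
    show "\<forall>g\<in>G. bij_betw g Om Om \<and> (\<forall>x. x \<notin> Om \<longrightarrow> g x = x)" unfolding aut_def by blast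
    show "id \<in> G" using aut_id by simp
    show "\<forall>g\<in>G. \<forall>h\<in>G. g \<circ> h \<in> G" using aut_comp by simp
    show "\<forall>g\<in>G. inv g \<in> G" using aut_inv(1) by simp
  qed
  show "transitive_on Om G" unfolding transitive_on_def using trans_pair by simp
  show "\<exists>g\<in>G. g \<noteq> id \<and> (\<exists>a\<in>Om. g a = a)"
  proof -
    have "card (Stab a0) \<ge> 2" using stab_card[OF a0] k2 by simp
    then have "\<not> Stab a0 \<subseteq> {id}" by (metis card.empty card.insert card_mono empty_iff finite.emptyI finite.insertI insert_absorb numeral_le_one_iff semiring_norm(69) subset_singletonD card_1_singleton_iff One_nat_def le_0_eq not_numeral_le_zero)
    then obtain g where "g \<in> Stab a0" "g \<noteq> id" by blast
    then show ?thesis unfolding Stab_def using a0 by blast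
  qed
  show "\<forall>g\<in>G. \<forall>a\<in>Om. \<forall>b\<in>Om. a \<noteq> b \<and> g a = a \<and> g b = b \<longrightarrow> g = id"
    using stab_fix_m by (metis mem_Collect_eq)
qed

lemma orbital_eq: assumes a: "a \<in> Om" and b: "b \<in> Om"
  shows "{(g a, g b) | g. g \<in> G} = S.cls (a, b)"
proof -
  let ?s = "S.cls (a, b)"
  have s: "?s \<in> S" "(a, b) \<in> ?s" using S.cls a b by auto
  show ?thesis
  proof
    show "{(g a, g b) | g. g \<in> G} \<subseteq> ?s"
    proof
      fix p assume "p \<in> {(g a, g b) | g. g \<in> G}"
      then obtain g where g: "aut g" "p = (g a, g b)" by blast
      then show "p \<in> ?s" using aut_rel[OF g(1) s(1) a b] s(2) by simp
    qed
    show "?s \<subseteq> {(g a, g b) | g. g \<in> G}"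
    proof
      fix p assume p: "p \<in> ?s"
      obtain x y where xy: "p = (x, y)" by (cases p)
      have xyO: "x \<in> Om" "y \<in> Om" using S.sub[OF s(1)] p xy by auto
      obtain g1 where g1: "aut g1" "g1 a = x" using trans_pair[OF a xyO(1)] by blast
      have "(g1 a, g1 b) \<in> ?s" using aut_rel[OF g1(1) s(1) a b] s(2) by simp
      then have x1: "(x, g1 b) \<in> ?s" using g1(2) by simp
      have x2: "(x, y) \<in> ?s" using p xy by simp
      obtain h where h: "aut h" "h x = x" "h (g1 b) = y" using stab_trans_m[OF xyO(1) s(1) x1 x2] by blast
      have "aut (h \<circ> g1)" using aut_comp[OF h(1) g1(1)] .
      moreover have "p = ((h \<circ> g1) a, (h \<circ> g1) b)" using xy g1(2) h(2,3) by simp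
      ultimately show "p \<in> {(g a, g b) | g. g \<in> G}" by blast
    qed
  qed
qed

lemma frob_scheme: "frobenius_scheme Om S"
  unfolding frobenius_scheme_def
proof (intro exI conjI)
  show "frobenius_group Om G" by (rule frob_group)
  show "S = orbitals Om G"
  proof
    show "S \<subseteq> orbitals Om G"
    proof
      fix s assume s: "s \<in> S"
      then obtain p where p: "p \<in> s" using S.nonempty by blast
      obtain a b where ab: "p = (a, b)" by (cases p)
      have abO: "a \<in> Om" "b \<in> Om" using S.sub[OF s] p ab by auto
      have "S.cls (a, b) = s" using S.cls_eq[OF s] p ab by simp
      then have "s = {(g a, g b) | g. g \<in> G}" using orbital_eq[OF abO] by simp
      then show "s \<in> orbitals Om G" unfolding orbitals_def using abO by blast
    qed
    show "orbitals Om G \<subseteq> S"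
    proof
      fix O2 assume "O2 \<in> orbitals Om G"
      then obtain a b where ab: "a \<in> Om" "b \<in> Om" "O2 = {(g a, g b) | g. g \<in> G}" unfolding orbitals_def by blast
      then show "O2 \<in> S" using orbital_eq[OF ab(1,2)] S.cls[of "(a, b)"] by simp
    qed
  qed
qed

end

theorem theorem6p1:
  fixes \<Omega> :: "'a set" and S :: "('a \<times> 'a) set set"
  assumes "scheme \<Omega> S"
    and "\<forall>a\<in>\<Omega>. \<forall>T. is_alpha_extension \<Omega> S a T \<longrightarrow>
           semiregular_on T (\<Omega> - {a}) \<and> fibers T = {nbhd a s | s. s \<in> S}"
  shows "regular_scheme \<Omega> S \<or> frobenius_scheme \<Omega> S"
proof (cases "\<forall>a\<in>\<Omega>. \<forall>s\<in>S. card (nbhd a s) \<le> 1")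
  case True
  have "semiregular \<Omega> S" unfolding semiregular_def using assms(1) True unfolding scheme_def by blast
  then show ?thesis using assms(1) unfolding regular_scheme_def by blast
next
  case False
  then obtain a0 s0 where a0: "a0 \<in> \<Omega>" "s0 \<in> S" "\<not> card (nbhd a0 s0) \<le> 1" by blast
  interpret N: nonreg \<Omega> S a0 s0
    by (intro nonreg.intro main.intro nonreg_axioms.intro assms) (use a0 in auto)
  show ?thesis using N.frob_scheme by blast
qed

end
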